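(* Let $(X_1,d_1)$ and $(X_2,d_2)$ be metric spaces admitting weak convergences $w_1,w_2$ respectively, and let $1\le q<\infty$. Then $w_1\otimes w_2$ is a weak convergence for $(X_1\times X_2,d_1\otimes_q d_2)$.
   Context: A convergence $c$ on a set $X$ is a rule assigning at most one point of $X$ as the "limit" of each sequence in $X$, such that whenever a sequence has limit $x$, every subsequence also has limit $x$; we write $x_n\to x$ in $c$. A convergence $w$ on $X$ is a weak convergence for $(X,d)$ if: (W1) whenever $\{x_n\}$ and $y$ in $X$ satisfy $\sup_n d(x_n,y)<\infty$, there are a subsequence $\{n_k\}$ and $x\in X$ with $x_{n_k}\to x$ in $w$; (W2) whenever $x_n\to x$ in $w$, $d(x,y)\le\liminf_n d(x_n,y)$ for all $y\in X$; (W3) whenever $x_n\to x$ in $w$ and $d(x_n,y)\to d(x,y)$ for some $y\in X$, then $d(x_n,x)\to0$. The metric $d_1\otimes_q d_2$ on $X_1\times X_2$ is $((x_1,x_2),(x_1',x_2'))\mapsto (d_1^q(x_1,x_1')+d_2^q(x_2,x_2'))^{1/q}$. The convergence $w_1\otimes w_2$ on $X_1\times X_2$ declares $(x_{1,n},x_{2,n})\to(x_1,x_2)$ iff $x_{1,n}\to x_1$ in $w_1$ and $x_{2,n}\to x_2$ in $w_2$. *)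

theory Defs
  imports "HOL-Analysis.Analysis"
begin

definition is_convergence :: "'a set \<Rightarrow> ((nat \<Rightarrow> 'a) \<Rightarrow> 'a \<Rightarrow> bool) \<Rightarrow> bool" where
  "is_convergence X c \<longleftrightarrow>
     (\<forall>s x. c s x \<longrightarrow> range s \<subseteq> X \<and> x \<in> X) \<and>
     (\<forall>s x y. c s x \<and> c s y \<longrightarrow> x = y) \<and>
     (\<forall>s x (r::nat\<Rightarrow>nat). c s x \<and> strict_mono r \<longrightarrow> c (s \<circ> r) x)"

definition is_weak_convergence ::
  "'a set \<Rightarrow> ('a \<Rightarrow> 'a \<Rightarrow> real) \<Rightarrow> ((nat \<Rightarrow> 'a) \<Rightarrow> 'a \<Rightarrow> bool) \<Rightarrow> bool" where
  "is_weak_convergence X d w \<longleftrightarrow>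
     is_convergence X w \<and>
     \<comment> \<open>(W1)\<close>
     (\<forall>s y. range s \<subseteq> X \<and> y \<in> X \<and> bdd_above (range (\<lambda>n. d (s n) y)) \<longrightarrow>
        (\<exists>(r::nat\<Rightarrow>nat) x. strict_mono r \<and> x \<in> X \<and> w (s \<circ> r) x)) \<and>
     \<comment> \<open>(W2)\<close>
     (\<forall>s x y. w s x \<and> y \<in> X \<longrightarrow> ereal (d x y) \<le> liminf (\<lambda>n. ereal (d (s n) y))) \<and>
     \<comment> \<open>(W3)\<close>
     (\<forall>s x y. w s x \<and> y \<in> X \<and> (\<lambda>n. d (s n) y) \<longlonglongrightarrow> d x y \<longrightarrow>
        (\<lambda>n. d (s n) x) \<longlonglongrightarrow> 0)"

definition q_prod_metric ::
  "real \<Rightarrow> ('a \<Rightarrow> 'a \<Rightarrow> real) \<Rightarrow> ('b \<Rightarrow> 'b \<Rightarrow> real) \<Rightarrow> ('a \<times> 'b) \<Rightarrow> ('a \<times> 'b) \<Rightarrow> real" where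
  "q_prod_metric q d1 d2 = (\<lambda>p p'. (d1 (fst p) (fst p') powr q + d2 (snd p) (snd p') powr q) powr (1 / q))"

definition prod_convergence ::
  "((nat \<Rightarrow> 'a) \<Rightarrow> 'a \<Rightarrow> bool) \<Rightarrow> ((nat \<Rightarrow> 'b) \<Rightarrow> 'b \<Rightarrow> bool) \<Rightarrow> (nat \<Rightarrow> 'a \<times> 'b) \<Rightarrow> 'a \<times> 'b \<Rightarrow> bool" where
  "prod_convergence w1 w2 = (\<lambda>s p. w1 (fst \<circ> s) (fst p) \<and> w2 (snd \<circ> s) (snd p))"

end

theory Submission
  imports Defs
begin

lemma pw_inv:
  fixes a q :: real assumes "a \<ge> 0" "q > 0"
  shows "(a powr q) powr (1/q) = a"
  using assms by (simp add: powr_powr)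

lemma pw_le_sum:
  fixes a b q :: real assumes "a \<ge> 0" "b \<ge> 0" "q > 0"
  shows "a \<le> (a powr q + b powr q) powr (1/q)"
proof -
  have "a = (a powr q) powr (1/q)" using pw_inv assms by simp
  also have "\<dots> \<le> (a powr q + b powr q) powr (1/q)"
    by (rule powr_mono2) (use assms in auto)
  finally show ?thesis .
qed

lemma lower:
  fixes a :: "nat \<Rightarrow> real"
  assumes "ereal A \<le> liminf (\<lambda>n. ereal (a n))" "\<And>n. a n \<ge> 0" "A \<ge> 0" "q > 0" "e > 0"
  shows "eventually (\<lambda>n. A powr q - e < a n powr q) sequentially"
proof (cases "A powr q - e < 0")
  case True
  have "A powr q - e < a n powr q" for n
    using True powr_ge_zero[of "a n" q] by linarith
  then show ?thesis by (intro always_eventually allI)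
next
  case False
  define c where "c = (A powr q - e) powr (1/q)"
  have c0: "c \<ge> 0" unfolding c_def by simp
  have cq: "c powr q = A powr q - e" unfolding c_def using False assms
    by (simp add: powr_powr)
  have "c < A"
  proof (rule ccontr)
    assume "\<not> c < A"
    then have "A powr q \<le> c powr q" using assms by (intro powr_mono2) auto
    then show False using cq assms by simp
  qed
  then have "ereal c < ereal A" by simp
  then have "eventually (\<lambda>n. ereal c < ereal (a n)) sequentially"
    using assms(1) unfolding le_Liminf_iff by blast
  then show ?thesis
  proof (rule eventually_mono)
    fix n assume "ereal c < ereal (a n)"
    then have "c < a n" by simp
    then have "c powr q < a n powr q" using c0 assms by (intro powr_less_mono2) auto
    then show "A powr q - e < a n powr q" using cq by simp
  qed
qed

lemma squeeze:
  fixes u v :: "nat \<Rightarrow> real"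
  assumes "\<And>e. e > 0 \<Longrightarrow> eventually (\<lambda>n. U - e < u n) sequentially"
    "\<And>e. e > 0 \<Longrightarrow> eventually (\<lambda>n. V - e < v n) sequentially"
    "(\<lambda>n. u n + v n) \<longlonglongrightarrow> U + V"
  shows "u \<longlonglongrightarrow> U"
  unfolding tendsto_iff
proof (intro allI impI)
  fix e :: real assume e: "e > 0"
  have "eventually (\<lambda>n. dist (u n + v n) (U + V) < e/2) sequentially"
  proof -
    have "e/2 > 0" using e by simp
    then show ?thesis using assms(3) unfolding tendsto_iff by blast
  qed
  moreover have "eventually (\<lambda>n. U - e/2 < u n) sequentially" using assms(1) e by simp
  moreover have "eventually (\<lambda>n. V - e/2 < v n) sequentially" using assms(2) e by simp
  ultimately show "eventually (\<lambda>n. dist (u n) U < e) sequentially"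
    by eventually_elim (unfold dist_real_def, arith)
qed

theorem proposition2p8:
  fixes X1 :: "'a set" and X2 :: "'b set" and q :: real
  assumes "Metric_space X1 d1" and "Metric_space X2 d2"
    and "is_weak_convergence X1 d1 w1" and "is_weak_convergence X2 d2 w2"
    and "1 \<le> q"
  shows "is_weak_convergence (X1 \<times> X2) (q_prod_metric q d1 d2) (prod_convergence w1 w2)"
proof -
  have q0: "q > 0" using assms(5) by simp
  have n1[simp]: "\<And>x y. 0 \<le> d1 x y" using Metric_space.nonneg[OF assms(1)] by blast
  have n2[simp]: "\<And>x y. 0 \<le> d2 x y" using Metric_space.nonneg[OF assms(2)] by blast
  note W1 = assms(3)[unfolded is_weak_convergence_def is_convergence_def]
  have A1: "\<And>s x. w1 s x \<Longrightarrow> range s \<subseteq> X1 \<and> x \<in> X1"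
    and U1: "\<And>s x y. w1 s x \<Longrightarrow> w1 s y \<Longrightarrow> x = y"
    and S1: "\<And>s x r. w1 s x \<Longrightarrow> strict_mono r \<Longrightarrow> w1 (s \<circ> r) x"
    and B1: "\<And>s y. range s \<subseteq> X1 \<Longrightarrow> y \<in> X1 \<Longrightarrow> bdd_above (range (\<lambda>n. d1 (s n) y)) \<Longrightarrow>
        (\<exists>(r::nat\<Rightarrow>nat) x. strict_mono r \<and> x \<in> X1 \<and> w1 (s \<circ> r) x)"
    and L1: "\<And>s x y. w1 s x \<Longrightarrow> y \<in> X1 \<Longrightarrow> ereal (d1 x y) \<le> liminf (\<lambda>n. ereal (d1 (s n) y))"
    and T1: "\<And>s x y. w1 s x \<Longrightarrow> y \<in> X1 \<Longrightarrow> (\<lambda>n. d1 (s n) y) \<longlonglongrightarrow> d1 x y \<Longrightarrow>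
        (\<lambda>n. d1 (s n) x) \<longlonglongrightarrow> 0"
    using W1[THEN conjunct1, THEN conjunct1, rule_format]
      W1[THEN conjunct1, THEN conjunct2, THEN conjunct1, rule_format]
      W1[THEN conjunct1, THEN conjunct2, THEN conjunct2, rule_format]
      W1[THEN conjunct2, THEN conjunct1, rule_format]
      W1[THEN conjunct2, THEN conjunct2, THEN conjunct1, rule_format]
      W1[THEN conjunct2, THEN conjunct2, THEN conjunct2, rule_format]
    by (metis, metis, metis, metis, metis, metis)
  note W2 = assms(4)[unfolded is_weak_convergence_def is_convergence_def]
  have A2: "\<And>s x. w2 s x \<Longrightarrow> range s \<subseteq> X2 \<and> x \<in> X2"
    and U2: "\<And>s x y. w2 s x \<Longrightarrow> w2 s y \<Longrightarrow> x = y"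
    and S2: "\<And>s x r. w2 s x \<Longrightarrow> strict_mono r \<Longrightarrow> w2 (s \<circ> r) x"
    and B2: "\<And>s y. range s \<subseteq> X2 \<Longrightarrow> y \<in> X2 \<Longrightarrow> bdd_above (range (\<lambda>n. d2 (s n) y)) \<Longrightarrow>
        (\<exists>(r::nat\<Rightarrow>nat) x. strict_mono r \<and> x \<in> X2 \<and> w2 (s \<circ> r) x)"
    and L2: "\<And>s x y. w2 s x \<Longrightarrow> y \<in> X2 \<Longrightarrow> ereal (d2 x y) \<le> liminf (\<lambda>n. ereal (d2 (s n) y))"
    and T2: "\<And>s x y. w2 s x \<Longrightarrow> y \<in> X2 \<Longrightarrow> (\<lambda>n. d2 (s n) y) \<longlonglongrightarrow> d2 x y \<Longrightarrow>
        (\<lambda>n. d2 (s n) x) \<longlonglongrightarrow> 0"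
    using W2[THEN conjunct1, THEN conjunct1, rule_format]
      W2[THEN conjunct1, THEN conjunct2, THEN conjunct1, rule_format]
      W2[THEN conjunct1, THEN conjunct2, THEN conjunct2, rule_format]
      W2[THEN conjunct2, THEN conjunct1, rule_format]
      W2[THEN conjunct2, THEN conjunct2, THEN conjunct1, rule_format]
      W2[THEN conjunct2, THEN conjunct2, THEN conjunct2, rule_format]
    by (metis, metis, metis, metis, metis, metis)
  let ?D = "q_prod_metric q d1 d2"
  let ?w = "prod_convergence w1 w2"
  have Dp: "?D p p' = (d1 (fst p) (fst p') powr q + d2 (snd p) (snd p') powr q) powr (1/q)" for p p'
    by (simp add: q_prod_metric_def)
  have wp: "?w s x \<longleftrightarrow> w1 (fst \<circ> s) (fst x) \<and> w2 (snd \<circ> s) (snd x)" for s x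
    by (simp add: prod_convergence_def)
  have c1: "\<forall>s x. ?w s x \<longrightarrow> range s \<subseteq> X1 \<times> X2 \<and> x \<in> X1 \<times> X2"
  proof (intro allI impI)
    fix s x assume h: "?w s x"
    then have "range (fst \<circ> s) \<subseteq> X1" "range (snd \<circ> s) \<subseteq> X2" "fst x \<in> X1" "snd x \<in> X2"
      using A1 A2 wp by blast+
    then show "range s \<subseteq> X1 \<times> X2 \<and> x \<in> X1 \<times> X2"
      by (auto simp: mem_Times_iff image_subset_iff)
  qed
  have c2: "\<forall>s x y. ?w s x \<and> ?w s y \<longrightarrow> x = y"
  proof (intro allI impI)
    fix s x y assume "?w s x \<and> ?w s y"
    then have "fst x = fst y" "snd x = snd y" using U1 U2 wp by blast+
    then show "x = y" by (simp add: prod_eq_iff)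
  qed
  have c3: "\<forall>s x (r::nat\<Rightarrow>nat). ?w s x \<and> strict_mono r \<longrightarrow> ?w (s \<circ> r) x"
  proof (intro allI impI)
    fix s x and r :: "nat \<Rightarrow> nat"
    assume h: "?w s x \<and> strict_mono r"
    then have "w1 (fst \<circ> s \<circ> r) (fst x)" "w2 (snd \<circ> s \<circ> r) (snd x)" using S1 S2 wp by blast+
    then show "?w (s \<circ> r) x" using wp by (simp add: comp_assoc)
  qed
  have conv: "is_convergence (X1 \<times> X2) ?w"
    unfolding is_convergence_def by (intro conjI c1 c2 c3)
  have ax1: "\<forall>s y. range s \<subseteq> X1 \<times> X2 \<and> y \<in> X1 \<times> X2 \<and> bdd_above (range (\<lambda>n. ?D (s n) y)) \<longrightarrow>
        (\<exists>(r::nat\<Rightarrow>nat) x. strict_mono r \<and> x \<in> X1 \<times> X2 \<and> ?w (s \<circ> r) x)"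
  proof (intro allI impI)
    fix s :: "nat \<Rightarrow> 'a \<times> 'b" and y assume h: "range s \<subseteq> X1 \<times> X2 \<and> y \<in> X1 \<times> X2 \<and> bdd_above (range (\<lambda>n. ?D (s n) y))"
    then obtain M where M: "\<And>n. ?D (s n) y \<le> M" by (auto simp: bdd_above_def)
    have "d1 (fst (s n)) (fst y) \<le> M" for n
      using pw_le_sum[of "d1 (fst (s n)) (fst y)" "d2 (snd (s n)) (snd y)" q] q0 M[of n] Dp[of "s n" y] by simp
    then have b1: "bdd_above (range (\<lambda>n. d1 ((fst \<circ> s) n) (fst y)))" by (auto simp: bdd_above_def)
    have r1s: "range (fst \<circ> s) \<subseteq> X1" "fst y \<in> X1" using h by (auto simp: mem_Times_iff image_subset_iff)
    obtain r1 :: "nat \<Rightarrow> nat" and x1 where r1: "strict_mono r1" "x1 \<in> X1" "w1 (fst \<circ> s \<circ> r1) x1"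
      using B1[OF r1s b1] by blast
    have "d2 (snd (s n)) (snd y) \<le> M" for n
      using pw_le_sum[of "d2 (snd (s n)) (snd y)" "d1 (fst (s n)) (fst y)" q] q0 M[of n] Dp[of "s n" y]
      by (simp add: add.commute)
    then have b2: "bdd_above (range (\<lambda>n. d2 ((snd \<circ> s \<circ> r1) n) (snd y)))" by (auto simp: bdd_above_def)
    have r2s: "range (snd \<circ> s \<circ> r1) \<subseteq> X2" "snd y \<in> X2" using h by (auto simp: mem_Times_iff image_subset_iff)
    obtain r2 :: "nat \<Rightarrow> nat" and x2 where r2: "strict_mono r2" "x2 \<in> X2" "w2 (snd \<circ> s \<circ> r1 \<circ> r2) x2"
      using B2[OF r2s b2] by blast
    have "w1 (fst \<circ> s \<circ> r1 \<circ> r2) x1" using S1 r1 r2 by blast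
    then have "?w (s \<circ> (r1 \<circ> r2)) (x1, x2)" using r2 wp by (simp add: comp_assoc)
    moreover have "strict_mono (r1 \<circ> r2)" using r1 r2 strict_mono_o by blast
    moreover have "(x1, x2) \<in> X1 \<times> X2" using r1 r2 by simp
    ultimately show "\<exists>(r::nat\<Rightarrow>nat) x. strict_mono r \<and> x \<in> X1 \<times> X2 \<and> ?w (s \<circ> r) x" by blast
  qed
  have low1: "eventually (\<lambda>n. d1 (fst x) (fst y) powr q - e < d1 (fst (s n)) (fst y) powr q) sequentially"
    if "?w s x" "y \<in> X1 \<times> X2" "e > 0" for s x y e
  proof -
    have "w1 (fst \<circ> s) (fst x)" "fst y \<in> X1" using that wp by (auto simp: mem_Times_iff)
    from L1[OF this] have "ereal (d1 (fst x) (fst y)) \<le> liminf (\<lambda>n. ereal (d1 (fst (s n)) (fst y)))"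
      by simp
    then show ?thesis using lower[OF _ _ _ q0 that(3)] by simp
  qed
  have low2: "eventually (\<lambda>n. d2 (snd x) (snd y) powr q - e < d2 (snd (s n)) (snd y) powr q) sequentially"
    if "?w s x" "y \<in> X1 \<times> X2" "e > 0" for s x y e
  proof -
    have "w2 (snd \<circ> s) (snd x)" "snd y \<in> X2" using that wp by (auto simp: mem_Times_iff)
    from L2[OF this] have "ereal (d2 (snd x) (snd y)) \<le> liminf (\<lambda>n. ereal (d2 (snd (s n)) (snd y)))"
      by simp
    then show ?thesis using lower[OF _ _ _ q0 that(3)] by simp
  qed
  have ax2: "\<forall>s x y. ?w s x \<and> y \<in> X1 \<times> X2 \<longrightarrow> ereal (?D x y) \<le> liminf (\<lambda>n. ereal (?D (s n) y))"
  proof (intro allI impI)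
    fix s x y assume h: "?w s x \<and> y \<in> X1 \<times> X2"
    then have hs: "?w s x" "y \<in> X1 \<times> X2" by auto
    let ?U = "d1 (fst x) (fst y) powr q + d2 (snd x) (snd y) powr q"
    show "ereal (?D x y) \<le> liminf (\<lambda>n. ereal (?D (s n) y))"
      unfolding le_Liminf_iff
    proof (intro allI impI)
      fix c :: ereal assume c: "c < ereal (?D x y)"
      show "eventually (\<lambda>n. c < ereal (?D (s n) y)) sequentially"
      proof (cases "c < 0")
        case True
        then show ?thesis by (intro always_eventually allI)
            (metis Dp ereal_less_eq(5) le_less_trans not_le powr_ge_zero)
      next
        case False
        then obtain r where r: "c = ereal r" "r \<ge> 0" "r < ?D x y" using c
          by (cases c) auto
        have "r powr q < ?D x y powr q" using r q0 by (intro powr_less_mono2) auto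
        also have "?D x y powr q = ?U" using Dp q0 by (simp add: powr_powr)
        finally have rU: "r powr q < ?U" .
        define e where "e = (?U - r powr q) / 2"
        have e: "e > 0" using rU by (simp add: e_def)
        have "eventually (\<lambda>n. c < ereal (?D (s n) y)) sequentially"
          using low1[OF hs e] low2[OF hs e]
        proof eventually_elim
          case (elim n)
          let ?V = "d1 (fst (s n)) (fst y) powr q + d2 (snd (s n)) (snd y) powr q"
          have "r powr q < ?V" using elim unfolding e_def by (simp add: field_simps)
          then have "(r powr q) powr (1/q) < ?V powr (1/q)"
            using q0 by (intro powr_less_mono2) auto
          then have "r < ?D (s n) y" using r q0 Dp by (simp add: powr_powr)
          then show ?case using r by simp
        qed
        then show ?thesis .
      qed
    qed
  qed
  have ax3: "\<forall>s x y. ?w s x \<and> y \<in> X1 \<times> X2 \<and> (\<lambda>n. ?D (s n) y) \<longlonglongrightarrow> ?D x y \<longrightarrow>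
        (\<lambda>n. ?D (s n) x) \<longlonglongrightarrow> 0"
  proof (intro allI impI)
    fix s x y assume h: "?w s x \<and> y \<in> X1 \<times> X2 \<and> (\<lambda>n. ?D (s n) y) \<longlonglongrightarrow> ?D x y"
    let ?u = "\<lambda>n. d1 (fst (s n)) (fst y) powr q"
    let ?v = "\<lambda>n. d2 (snd (s n)) (snd y) powr q"
    let ?U = "d1 (fst x) (fst y) powr q"
    let ?V = "d2 (snd x) (snd y) powr q"
    have "(\<lambda>n. ?D (s n) y powr q) \<longlonglongrightarrow> ?D x y powr q"
      using tendsto_powr'[of "\<lambda>n. ?D (s n) y" "?D x y" sequentially "\<lambda>_. q" q] h q0
      by (auto simp: Dp)
    then have sum: "(\<lambda>n. ?u n + ?v n) \<longlonglongrightarrow> ?U + ?V"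
      using q0 by (simp add: Dp powr_powr)
    have uU: "?u \<longlonglongrightarrow> ?U"
      by (rule squeeze[OF _ _ sum]) (use low1 low2 h in auto)
    have vV: "?v \<longlonglongrightarrow> ?V"
      by (rule squeeze[OF _ _ sum[unfolded add.commute[of "?u _"] add.commute[of ?U]]])
         (use low1 low2 h in auto)
    have "(\<lambda>n. ?u n powr (1/q)) \<longlonglongrightarrow> ?U powr (1/q)"
      using tendsto_powr'[OF uU tendsto_const[of "1/q"]] q0 by auto
    then have t1: "(\<lambda>n. d1 ((fst \<circ> s) n) (fst y)) \<longlonglongrightarrow> d1 (fst x) (fst y)"
      using q0 by (simp add: powr_powr)
    have "(\<lambda>n. ?v n powr (1/q)) \<longlonglongrightarrow> ?V powr (1/q)"
      using tendsto_powr'[OF vV tendsto_const[of "1/q"]] q0 by auto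
    then have t2: "(\<lambda>n. d2 ((snd \<circ> s) n) (snd y)) \<longlonglongrightarrow> d2 (snd x) (snd y)"
      using q0 by (simp add: powr_powr)
    have z1: "(\<lambda>n. d1 ((fst \<circ> s) n) (fst x)) \<longlonglongrightarrow> 0"
    proof -
      have "w1 (fst \<circ> s) (fst x)" "fst y \<in> X1" using h wp by (auto simp: mem_Times_iff)
      from T1[OF this t1] show ?thesis .
    qed
    have z2: "(\<lambda>n. d2 ((snd \<circ> s) n) (snd x)) \<longlonglongrightarrow> 0"
    proof -
      have "w2 (snd \<circ> s) (snd x)" "snd y \<in> X2" using h wp by (auto simp: mem_Times_iff)
      from T2[OF this t2] show ?thesis .
    qed
    have "(\<lambda>n. (d1 ((fst \<circ> s) n) (fst x) powr q + d2 ((snd \<circ> s) n) (snd x) powr q) powr (1/q))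
        \<longlonglongrightarrow> (0 powr q + 0 powr q) powr (1/q)"
      using z1 z2 q0 by (intro tendsto_intros) auto
    then show "(\<lambda>n. ?D (s n) x) \<longlonglongrightarrow> 0" by (simp add: Dp)
  qed
  show ?thesis unfolding is_weak_convergence_def using conv ax1 ax2 ax3 by blast
qed

end
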